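(* There is an absolute constant $\kappa>0$ such that the following holds. Let $X,Y,Z$ be finite sets with $|Z|\ge 2$ and $f:X\times Y\to Z$ with $\mathrm{mdisc}(f)\le 2^{-d}$. Let $l,r\ge 1$ and let $O=\{(i_1,j_1),\dots,(i_k,j_k)\}$ be a set of $k$ distinct pairs with $i_t\in\{1,\dots,l\}$, $j_t\in\{1,\dots,r\}$, where $k\le d/5$. Define $f_O:X^l\times Y^r\to Z^k$ by $f_O(x_1,\dots,x_l,y_1,\dots,y_r)=(f(x_{i_1},y_{j_1}),\dots,f(x_{i_k},y_{j_k}))$. Then $\mathrm{mdisc}(f_O)\le \kappa\, 2^{-d/4}$, where the multicolor discrepancy of $f_O$ is taken with color set $Z^k$ and the uniform distribution on $X^l\times Y^r$.
   Context: Rectangles are product sets $A\times B$ in the relevant product domain; $\mu$ is the uniform distribution on that domain. For $M:U\times V\to W$ with $W$ finite, $\mathrm{mdisc}(M)=\max_R\max_{w\in W}|\mu(R\cap M^{-1}(w))-\mu(R)/|W||$, maximum over all rectangles $R\subseteq U\times V$. *)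

theory Defs
  imports Complex_Main
begin

definition unif_mu :: "'u set \<Rightarrow> 'v set \<Rightarrow> ('u \<times> 'v) set \<Rightarrow> real" where
  "unif_mu U V S = real (card (S \<inter> (U \<times> V))) / (real (card U) * real (card V))"

definition mdisc :: "'u set \<Rightarrow> 'v set \<Rightarrow> 'w set \<Rightarrow> ('u \<Rightarrow> 'v \<Rightarrow> 'w) \<Rightarrow> real" where
  "mdisc U V W M = Max { \<bar>unif_mu U V ((A \<times> B) \<inter> {(u, v). M u v = w})
                          - unif_mu U V (A \<times> B) / real (card W)\<bar>
                        | A B w. A \<subseteq> U \<and> B \<subseteq> V \<and> w \<in> W }"

definition tuples :: "'a set \<Rightarrow> nat \<Rightarrow> 'a list set" where
  "tuples S n = {xs. length xs = n \<and> set xs \<subseteq> S}"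

text \<open>f_O(x_1..x_l, y_1..y_r) = (f(x_{i_1},y_{j_1}), ..., f(x_{i_k},y_{j_k})), indices 0-based.\<close>
definition fO :: "('a \<Rightarrow> 'b \<Rightarrow> 'c) \<Rightarrow> (nat \<times> nat) list \<Rightarrow> 'a list \<Rightarrow> 'b list \<Rightarrow> 'c list" where
  "fO f Ob xs ys = map (\<lambda>(i, j). f (xs ! i) (ys ! j)) Ob"

end

theory Submission
  imports Defs
begin

lemma finite_tuples: "finite S \<Longrightarrow> finite (tuples S n)"
  unfolding tuples_def using finite_lists_length_eq[of S n] by (simp add: conj_commute)

lemma card_tuples: "finite S \<Longrightarrow> card (tuples S n) = card S ^ n"
  unfolding tuples_def using card_lists_length_eq[of S n] by (simp add: conj_commute)

lemma tuples_nonempty: "S \<noteq> {} \<Longrightarrow> tuples S n \<noteq> {}"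
proof -
  assume "S \<noteq> {}" then obtain s where "s \<in> S" by blast
  then have "replicate n s \<in> tuples S n" by (auto simp: tuples_def)
  then show ?thesis by blast
qed

lemma mdisc_set_finite:
  assumes "finite U" "finite V" "finite W"
  shows "finite { \<bar>unif_mu U V ((A \<times> B) \<inter> {(u, v). M u v = w})
                          - unif_mu U V (A \<times> B) / real (card W)\<bar>
                        | A B w. A \<subseteq> U \<and> B \<subseteq> V \<and> w \<in> W }" (is "finite ?S")
proof -
  have "?S = (\<lambda>(A,B,w). \<bar>unif_mu U V ((A \<times> B) \<inter> {(u, v). M u v = w})
                          - unif_mu U V (A \<times> B) / real (card W)\<bar>) ` (Pow U \<times> Pow V \<times> W)"
    by (auto simp: image_iff) blast
  then show ?thesis using assms by simp
qed

lemma mdisc_ge: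
  assumes "finite U" "finite V" "finite W" "A \<subseteq> U" "B \<subseteq> V" "w \<in> W"
  shows "\<bar>unif_mu U V ((A \<times> B) \<inter> {(u, v). M u v = w})
                          - unif_mu U V (A \<times> B) / real (card W)\<bar> \<le> mdisc U V W M"
  unfolding mdisc_def
  by (rule Max_ge[OF mdisc_set_finite[OF assms(1-3)]]) (use assms in blast)

lemma mdisc_le:
  assumes "finite U" "finite V" "finite W" "W \<noteq> {}"
    and "\<And>A B w. A \<subseteq> U \<Longrightarrow> B \<subseteq> V \<Longrightarrow> w \<in> W \<Longrightarrow> \<bar>unif_mu U V ((A \<times> B) \<inter> {(u, v). M u v = w})
                          - unif_mu U V (A \<times> B) / real (card W)\<bar> \<le> b"
  shows "mdisc U V W M \<le> b"
  unfolding mdisc_def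
  apply (subst Max_le_iff[OF mdisc_set_finite[OF assms(1-3)]])
  using assms(4,5) by blast+

lemma card_as_sum:
  assumes "finite P" "finite Q"
  shows "real (card (S \<inter> (P \<times> Q))) = (\<Sum>x\<in>P. \<Sum>y\<in>Q. if (x,y) \<in> S then 1 else 0)"
proof -
  have "S \<inter> (P \<times> Q) = {p \<in> P \<times> Q. p \<in> S}" by auto
  then have "real (card (S \<inter> (P \<times> Q))) = (\<Sum>p\<in>{p \<in> P \<times> Q. p \<in> S}. 1)" by simp
  also have "\<dots> = (\<Sum>p\<in>P \<times> Q. if p \<in> S then 1 else 0)"
    by (rule sum.inter_filter) (use assms in simp)
  also have "\<dots> = (\<Sum>x\<in>P. \<Sum>y\<in>Q. if (x,y) \<in> S then 1 else 0)"
    by (simp add: sum.cartesian_product)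
  finally show ?thesis .
qed

lemma tuples_split:
  assumes "i < l"
  shows "tuples X l = (\<lambda>((us,vs),a). us @ a # vs) ` ((tuples X i \<times> tuples X (l - Suc i)) \<times> X)"
proof
  show "tuples X l \<subseteq> (\<lambda>((us,vs),a). us @ a # vs) ` ((tuples X i \<times> tuples X (l - Suc i)) \<times> X)"
  proof
    fix xs assume xs: "xs \<in> tuples X l"
    have "xs = take i xs @ xs ! i # drop (Suc i) xs"
      using xs assms by (simp add: tuples_def id_take_nth_drop)
    moreover have "((take i xs, drop (Suc i) xs), xs ! i) \<in> (tuples X i \<times> tuples X (l - Suc i)) \<times> X"
      using xs assms by (auto simp: tuples_def dest: in_set_takeD in_set_dropD)
    ultimately show "xs \<in> (\<lambda>((us,vs),a). us @ a # vs) ` ((tuples X i \<times> tuples X (l - Suc i)) \<times> X)"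
      by force
  qed
  show "(\<lambda>((us,vs),a). us @ a # vs) ` ((tuples X i \<times> tuples X (l - Suc i)) \<times> X) \<subseteq> tuples X l"
    using assms by (auto simp: tuples_def)
qed

lemma tuples_split_inj:
  "inj_on (\<lambda>((us,vs),a). us @ a # vs) ((tuples X i \<times> tuples X m) \<times> X)"
  by (auto simp: inj_on_def tuples_def)

lemma sum_tuples_split:
  assumes "i < l"
  shows "(\<Sum>xs\<in>tuples X l. F xs) = (\<Sum>u\<in>tuples X i \<times> tuples X (l - Suc i). \<Sum>a\<in>X. F (fst u @ a # snd u))"
proof -
  have "(\<Sum>xs\<in>tuples X l. F xs) = (\<Sum>p\<in>(tuples X i \<times> tuples X (l - Suc i)) \<times> X. F ((\<lambda>((us,vs),a). us @ a # vs) p))"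
    by (subst tuples_split[OF assms], rule sum.reindex[OF tuples_split_inj, unfolded comp_def])
  also have "\<dots> = (\<Sum>u\<in>tuples X i \<times> tuples X (l - Suc i). \<Sum>a\<in>X. F (fst u @ a # snd u))"
    by (simp add: sum.cartesian_product case_prod_beta)
  finally show ?thesis .
qed

lemma nth_mid_same: "length us = i \<Longrightarrow> (us @ a # vs) ! i = a"
  by (simp add: nth_append)

lemma nth_mid_other: "length us = i \<Longrightarrow> p \<noteq> i \<Longrightarrow> (us @ a # vs) ! p = (us @ b # vs) ! p"
  by (auto simp: nth_append nth_Cons split: nat.splits)

lemma key:
  fixes f :: "'a \<Rightarrow> 'b \<Rightarrow> 'c" and C :: "'a list \<Rightarrow> 'b list \<Rightarrow> bool"
  assumes finX: "finite X" and finY: "finite Y" and il: "i < l" and jr: "j < r"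
    and rect: "\<And>us vs us' vs' a a' b b'. length us = i \<Longrightarrow> length us' = j \<Longrightarrow> a \<in> X \<Longrightarrow> a' \<in> X
      \<Longrightarrow> b \<in> Y \<Longrightarrow> b' \<in> Y \<Longrightarrow> C (us @ a # vs) (us' @ b # vs') \<Longrightarrow> C (us @ a' # vs) (us' @ b' # vs')
      \<Longrightarrow> C (us @ a # vs) (us' @ b' # vs')"
    and md: "\<And>A' B'. A' \<subseteq> X \<Longrightarrow> B' \<subseteq> Y \<Longrightarrow>
      \<bar>unif_mu X Y ((A' \<times> B') \<inter> {(u, v). f u v = w}) - unif_mu X Y (A' \<times> B') / cz\<bar> \<le> m"
  shows "\<bar>\<Sum>xs\<in>tuples X l. \<Sum>ys\<in>tuples Y r. if C xs ys then (if f (xs ! i) (ys ! j) = w then 1 else 0) - 1 / cz else 0\<bar>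
     \<le> real (card (tuples X l)) * real (card (tuples Y r)) * m"
proof -
  define G where "G xs ys = (if C xs ys then (if f (xs ! i) (ys ! j) = w then 1 else 0) - 1 / cz else (0::real))" for xs ys
  define U where "U = tuples X i \<times> tuples X (l - Suc i)"
  define U' where "U' = tuples Y j \<times> tuples Y (r - Suc j)"
  have m0: "0 \<le> m" using md[of "{}" "{}"] by simp
  have inner: "\<bar>\<Sum>a\<in>X. \<Sum>b\<in>Y. G (fst u @ a # snd u) (fst u' @ b # snd u')\<bar> \<le> real (card X) * real (card Y) * m"
    if u: "u \<in> U" and u': "u' \<in> U'" for u u'
  proof -
    define g where "g a = fst u @ a # snd u" for a
    define g' where "g' b = fst u' @ b # snd u'" for b
    have lu: "length (fst u) = i" using u by (auto simp: U_def tuples_def)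
    have lu': "length (fst u') = j" using u' by (auto simp: U'_def tuples_def)
    define A' where "A' = {a\<in>X. \<exists>b\<in>Y. C (g a) (g' b)}"
    define B' where "B' = {b\<in>Y. \<exists>a\<in>X. C (g a) (g' b)}"
    have A'X: "A' \<subseteq> X" and B'Y: "B' \<subseteq> Y" by (auto simp: A'_def B'_def)
    have iff: "C (g a) (g' b) \<longleftrightarrow> a \<in> A' \<and> b \<in> B'" if "a \<in> X" "b \<in> Y" for a b
    proof
      assume "C (g a) (g' b)" then show "a \<in> A' \<and> b \<in> B'" using that by (auto simp: A'_def B'_def)
    next
      assume "a \<in> A' \<and> b \<in> B'"
      then obtain b1 a1 where "b1 \<in> Y" "C (g a) (g' b1)" "a1 \<in> X" "C (g a1) (g' b)"
        by (auto simp: A'_def B'_def)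
      then show "C (g a) (g' b)" using rect[of "fst u" "fst u'" a a1 b1 b "snd u" "snd u'", OF lu lu'] that
        by (auto simp: g_def g'_def)
    qed
    have Geq: "G (g a) (g' b) = (if (a, b) \<in> (A' \<times> B') \<inter> {(u, v). f u v = w} then 1 else 0)
        - (1 / cz) * (if (a, b) \<in> A' \<times> B' then 1 else 0)" if "a \<in> X" "b \<in> Y" for a b
      using iff[OF that] by (auto simp: G_def g_def g'_def nth_mid_same[OF lu] nth_mid_same[OF lu'])
    have "(\<Sum>a\<in>X. \<Sum>b\<in>Y. G (g a) (g' b)) =
        (\<Sum>a\<in>X. \<Sum>b\<in>Y. (if (a, b) \<in> (A' \<times> B') \<inter> {(u, v). f u v = w} then 1 else 0))
        - (1 / cz) * (\<Sum>a\<in>X. \<Sum>b\<in>Y. (if (a, b) \<in> A' \<times> B' then 1 else 0))"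
      by (simp add: Geq sum_subtractf sum_distrib_left)
    also have "\<dots> = real (card ((A' \<times> B') \<inter> {(u, v). f u v = w} \<inter> (X \<times> Y)))
        - (1 / cz) * real (card ((A' \<times> B') \<inter> (X \<times> Y)))"
      by (simp add: card_as_sum[OF finX finY])
    finally have S: "(\<Sum>a\<in>X. \<Sum>b\<in>Y. G (g a) (g' b)) = \<dots>" .
    show ?thesis
    proof (cases "X = {} \<or> Y = {}")
      case True then show ?thesis by auto
    next
      case False
      then have pos: "real (card X) * real (card Y) > 0" using finX finY by (simp add: card_gt_0_iff)
      have "(\<Sum>a\<in>X. \<Sum>b\<in>Y. G (g a) (g' b)) = real (card X) * real (card Y) *
          (unif_mu X Y ((A' \<times> B') \<inter> {(u, v). f u v = w}) - unif_mu X Y (A' \<times> B') / cz)"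
      proof -
        have "card X > 0" "card Y > 0" using False finX finY by (auto simp: card_gt_0_iff)
        then show ?thesis unfolding S unif_mu_def by (cases "cz = 0") (simp_all add: field_simps)
      qed
      then have "\<bar>\<Sum>a\<in>X. \<Sum>b\<in>Y. G (g a) (g' b)\<bar> = real (card X) * real (card Y) *
          \<bar>unif_mu X Y ((A' \<times> B') \<inter> {(u, v). f u v = w}) - unif_mu X Y (A' \<times> B') / cz\<bar>"
        using pos by (simp add: abs_mult)
      also have "\<dots> \<le> real (card X) * real (card Y) * m"
        using md[OF A'X B'Y] pos by (simp add: mult_left_mono)
      finally show ?thesis by (simp add: g_def g'_def)
    qed
  qed
  have "(\<Sum>xs\<in>tuples X l. \<Sum>ys\<in>tuples Y r. G xs ys) =
      (\<Sum>u\<in>U. \<Sum>a\<in>X. \<Sum>u'\<in>U'. \<Sum>b\<in>Y. G (fst u @ a # snd u) (fst u' @ b # snd u'))"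
    by (simp add: U_def U'_def sum_tuples_split[OF il] sum_tuples_split[OF jr])
  also have "\<dots> = (\<Sum>u\<in>U. \<Sum>u'\<in>U'. \<Sum>a\<in>X. \<Sum>b\<in>Y. G (fst u @ a # snd u) (fst u' @ b # snd u'))"
    by (rule sum.cong[OF refl], rule sum.swap)
  finally have E: "(\<Sum>xs\<in>tuples X l. \<Sum>ys\<in>tuples Y r. G xs ys) = \<dots>" .
  have "\<bar>\<Sum>xs\<in>tuples X l. \<Sum>ys\<in>tuples Y r. G xs ys\<bar> \<le>
      (\<Sum>u\<in>U. \<Sum>u'\<in>U'. \<bar>\<Sum>a\<in>X. \<Sum>b\<in>Y. G (fst u @ a # snd u) (fst u' @ b # snd u')\<bar>)"
    unfolding E by (rule order_trans[OF sum_abs sum_mono]) (rule sum_abs)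
  also have "\<dots> \<le> (\<Sum>u\<in>U. \<Sum>u'\<in>U'. real (card X) * real (card Y) * m)"
    by (intro sum_mono inner)
  also have "\<dots> = real (card U) * real (card U') * (real (card X) * real (card Y) * m)"
    by simp
  also have "\<dots> = real (card (tuples X l)) * real (card (tuples Y r)) * m"
  proof -
    have l: "l = i + (l - Suc i) + 1" using il by simp
    have r: "r = j + (r - Suc j) + 1" using jr by simp
    have "card (tuples X l) = card X ^ i * card X ^ (l - Suc i) * card X"
      by (subst l, simp only: card_tuples[OF finX] power_add power_one_right)
    moreover have "card (tuples Y r) = card Y ^ j * card Y ^ (r - Suc j) * card Y"
      by (subst r, simp only: card_tuples[OF finY] power_add power_one_right)
    ultimately show ?thesis
      by (simp add: U_def U'_def card_cartesian_product card_tuples finX finY)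
  qed
  finally show ?thesis by (simp add: G_def)
qed

lemma all_less_Suc_split: "(\<forall>s<Suc t. P s) \<longleftrightarrow> (\<forall>s<t. P s) \<and> P t"
  by (auto simp: less_Suc_eq)

lemma rect_bound:
  fixes f :: "'a \<Rightarrow> 'b \<Rightarrow> 'c"
  assumes finX: "finite X" and finY: "finite Y" and finZ: "finite Z" and Z1: "card Z \<ge> 1"
    and dist: "distinct Ob" and rng: "\<forall>(i, j)\<in>set Ob. i < l \<and> j < r"
    and AP: "A \<subseteq> tuples X l" and BQ: "B \<subseteq> tuples Y r" and zW: "z \<in> tuples Z (length Ob)"
  shows "\<bar>unif_mu (tuples X l) (tuples Y r) ((A \<times> B) \<inter> {(u, v). fO f Ob u v = z})
     - unif_mu (tuples X l) (tuples Y r) (A \<times> B) / real (card (tuples Z (length Ob)))\<bar>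
     \<le> real (length Ob) * mdisc X Y Z f"
proof -
  define k where "k = length Ob"
  define P where "P = tuples X l"
  define Q where "Q = tuples Y r"
  define c where "c = 1 / real (card Z)"
  define m where "m = mdisc X Y Z f"
  define N where "N = real (card P) * real (card Q)"
  have finP: "finite P" and finQ: "finite Q" using finX finY by (simp_all add: P_def Q_def finite_tuples)
  have c0: "0 \<le> c" and c1: "c \<le> 1" using Z1 by (auto simp: c_def)
  have lz: "length z = k" and zZ: "set z \<subseteq> Z" using zW by (auto simp: tuples_def k_def)
  have Zne: "Z \<noteq> {}" using Z1 by auto
  then obtain w0 where w0: "w0 \<in> Z" by blast
  have m0: "0 \<le> m" unfolding m_def
    by (rule order_trans[OF abs_ge_zero mdisc_ge[OF finX finY finZ, of "{}" "{}" w0]]) (use w0 in auto)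
  define h where "h t xs ys = (\<forall>s<t. f (xs ! fst (Ob ! s)) (ys ! snd (Ob ! s)) = z ! s)" for t xs ys
  define T where "T t = (\<Sum>xs\<in>P. \<Sum>ys\<in>Q. if xs \<in> A \<and> ys \<in> B \<and> h t xs ys then c ^ (k - t) else 0)" for t
  have step: "\<bar>T (Suc t) - T t\<bar> \<le> N * m" if tk: "t < k" for t
  proof -
    define i where "i = fst (Ob ! t)"
    define j where "j = snd (Ob ! t)"
    define C where "C xs ys = (xs \<in> A \<and> ys \<in> B \<and> h t xs ys)" for xs ys
    have "Ob ! t \<in> set Ob" using tk by (simp add: k_def)
    then have il: "i < l" and jr: "j < r" using rng by (auto simp: i_def j_def case_prod_beta)
    have ztZ: "z ! t \<in> Z" using zZ lz tk by auto
    have pw: "(if xs \<in> A \<and> ys \<in> B \<and> h (Suc t) xs ys then c ^ (k - Suc t) else 0)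
        - (if xs \<in> A \<and> ys \<in> B \<and> h t xs ys then c ^ (k - t) else 0)
        = c ^ (k - Suc t) * (if C xs ys then (if f (xs ! i) (ys ! j) = z ! t then 1 else 0) - 1 / real (card Z) else 0)"
      for xs ys
    proof -
      have kt: "k - t = Suc (k - Suc t)" using tk by simp
      show ?thesis unfolding C_def h_def all_less_Suc_split kt
        by (auto simp: i_def j_def c_def algebra_simps)
    qed
    have "T (Suc t) - T t = c ^ (k - Suc t) * (\<Sum>xs\<in>P. \<Sum>ys\<in>Q.
        if C xs ys then (if f (xs ! i) (ys ! j) = z ! t then 1 else 0) - 1 / real (card Z) else 0)"
      unfolding T_def by (simp add: sum_subtractf[symmetric] pw sum_distrib_left)
    then have "\<bar>T (Suc t) - T t\<bar> = c ^ (k - Suc t) * \<bar>\<Sum>xs\<in>P. \<Sum>ys\<in>Q.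
        if C xs ys then (if f (xs ! i) (ys ! j) = z ! t then 1 else 0) - 1 / real (card Z) else 0\<bar>"
      using c0 by (simp add: abs_mult)
    moreover have bound: "\<bar>\<Sum>xs\<in>P. \<Sum>ys\<in>Q.
        if C xs ys then (if f (xs ! i) (ys ! j) = z ! t then 1 else 0) - 1 / real (card Z) else 0\<bar> \<le> N * m"
        unfolding P_def Q_def N_def m_def
      proof (rule key[OF finX finY il jr])
        fix A' B' assume "A' \<subseteq> X" "B' \<subseteq> Y"
        then show "\<bar>unif_mu X Y ((A' \<times> B') \<inter> {(u, v). f u v = z ! t}) - unif_mu X Y (A' \<times> B') / real (card Z)\<bar>
           \<le> mdisc X Y Z f" by (rule mdisc_ge[OF finX finY finZ _ _ ztZ])
      next
        fix us vs us' vs' a a' b b'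
        assume lu: "length us = i" and lu': "length us' = j"
          and C1: "C (us @ a # vs) (us' @ b # vs')" and C2: "C (us @ a' # vs) (us' @ b' # vs')"
        show "C (us @ a # vs) (us' @ b' # vs')"
          unfolding C_def h_def
        proof (intro conjI allI impI)
          show "us @ a # vs \<in> A" using C1 by (simp add: C_def)
          show "us' @ b' # vs' \<in> B" using C2 by (simp add: C_def)
          fix s assume st: "s < t"
          have ne: "Ob ! s \<noteq> Ob ! t" using dist st tk by (simp add: nth_eq_iff_index_eq k_def)
          show "f ((us @ a # vs) ! fst (Ob ! s)) ((us' @ b' # vs') ! snd (Ob ! s)) = z ! s"
          proof (cases "fst (Ob ! s) = i")
            case True
            then have "snd (Ob ! s) \<noteq> j" using ne by (auto simp: i_def j_def prod_eq_iff)
            then have "(us' @ b' # vs') ! snd (Ob ! s) = (us' @ b # vs') ! snd (Ob ! s)"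
              using nth_mid_other[OF lu'] by metis
            then show ?thesis using C1 st by (simp add: C_def h_def)
          next
            case False
            then have "(us @ a # vs) ! fst (Ob ! s) = (us @ a' # vs) ! fst (Ob ! s)"
              using nth_mid_other[OF lu] by metis
            then show ?thesis using C2 st by (simp add: C_def h_def)
          qed
        qed
      qed
    moreover have pl: "c ^ (k - Suc t) \<le> 1" using c0 c1 by (simp add: power_le_one)
    ultimately show ?thesis using mult_mono[OF pl bound zero_le_one abs_ge_zero] by simp
  qed
  have tele: "t \<le> k \<Longrightarrow> \<bar>T t - T 0\<bar> \<le> real t * (N * m)" for t
  proof (induction t)
    case 0 then show ?case by simp
  next
    case (Suc t)
    have "\<bar>T (Suc t) - T 0\<bar> \<le> \<bar>T (Suc t) - T t\<bar> + \<bar>T t - T 0\<bar>" by simp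
    also have "\<dots> \<le> N * m + real t * (N * m)" using step[of t] Suc by simp
    finally show ?case by (simp add: algebra_simps)
  qed
  have Tk: "T k = real (card (((A \<times> B) \<inter> {(u, v). fO f Ob u v = z}) \<inter> (P \<times> Q)))"
  proof -
    have "fO f Ob xs ys = z \<longleftrightarrow> h k xs ys" for xs ys
      unfolding fO_def h_def using lz
      by (auto simp: list_eq_iff_nth_eq k_def case_prod_beta)
    moreover have "c ^ (k - k) = 1" by simp
    ultimately show ?thesis unfolding T_def card_as_sum[OF finP finQ] diff_self_eq_0 power_0
      by (intro sum.cong refl) auto
  qed
  have T0: "T 0 = c ^ k * real (card ((A \<times> B) \<inter> (P \<times> Q)))"
    unfolding T_def card_as_sum[OF finP finQ] by (simp add: h_def sum_distrib_left if_distrib cong: if_cong)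
  have cardW: "real (card (tuples Z (length Ob))) = real (card Z) ^ k"
    by (simp add: card_tuples finZ k_def)
  show ?thesis
  proof (cases "N = 0")
    case True
    then have "card P = 0 \<or> card Q = 0" by (simp add: N_def)
    then show ?thesis using m0 unfolding m_def by (auto simp: unif_mu_def P_def Q_def)
  next
    case False
    have "unif_mu P Q ((A \<times> B) \<inter> {(u, v). fO f Ob u v = z}) - unif_mu P Q (A \<times> B) / real (card (tuples Z (length Ob)))
       = (T k - T 0) / N"
    proof -
      have "card P \<noteq> 0" "card Q \<noteq> 0" using False by (auto simp: N_def)
      moreover have "card Z \<noteq> 0" using Z1 by simp
      ultimately show ?thesis
        unfolding Tk T0 unif_mu_def cardW N_def c_def by (simp add: field_simps power_divide)
    qed
    also have "\<bar>\<dots>\<bar> \<le> real k * m"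
    proof -
      have Npos: "N > 0" using False by (simp add: N_def)
      have "\<bar>T k - T 0\<bar> \<le> real k * (N * m)" using tele by simp
      then show ?thesis using Npos by (simp add: divide_le_eq field_simps)
    qed
    finally show ?thesis by (simp add: P_def Q_def k_def m_def)
  qed
qed

lemma arith_final:
  fixes d k :: real
  assumes k0: "0 \<le> k" and kd: "k \<le> d / 5"
  shows "k * 2 powr (- d) \<le> 2 powr (- d / 4)"
proof -
  have d0: "0 \<le> d" using k0 kd by simp
  have "ln (1/2::real) \<le> 1/2 - 1" by (rule ln_le_minus_one) simp
  then have ln2: "1/2 \<le> ln (2::real)" by (simp add: ln_div)
  have "2 powr (3 * d / 4) = exp (3 * d / 4 * ln 2)" by (simp add: powr_def)
  also have "\<dots> \<ge> 1 + 3 * d / 4 * ln 2" by (rule exp_ge_add_one_self)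
  finally have e: "1 + 3 * d / 4 * ln 2 \<le> 2 powr (3 * d / 4)" .
  have "3 * d / 4 * (1/2) \<le> 3 * d / 4 * ln 2" using ln2 d0 by (intro mult_left_mono) auto
  then have big: "k \<le> 2 powr (3 * d / 4)" using e kd d0 by linarith
  have "k * 2 powr (- d) \<le> 2 powr (3 * d / 4) * 2 powr (- d)"
    by (rule mult_right_mono[OF big]) simp
  also have "\<dots> = 2 powr (- d / 4)" by (simp add: powr_add[symmetric])
  finally show ?thesis .
qed

theorem mainTheorem5:
  shows "\<exists>\<kappa>::real. \<kappa> > 0 \<and>
    (\<forall>(X::nat set) (Y::nat set) (Z::nat set) (f::nat \<Rightarrow> nat \<Rightarrow> nat) (d::real)
        (l::nat) (r::nat) (Ob::(nat \<times> nat) list).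
       finite X \<and> finite Y \<and> finite Z \<and> card Z \<ge> 2 \<and>
       (\<forall>x\<in>X. \<forall>y\<in>Y. f x y \<in> Z) \<and>
       mdisc X Y Z f \<le> 2 powr (- d) \<and>
       l \<ge> 1 \<and> r \<ge> 1 \<and>
       distinct Ob \<and> (\<forall>(i, j)\<in>set Ob. i < l \<and> j < r) \<and>
       real (length Ob) \<le> d / 5
       \<longrightarrow> mdisc (tuples X l) (tuples Y r) (tuples Z (length Ob)) (fO f Ob)
             \<le> \<kappa> * 2 powr (- d / 4))"
proof (intro exI[of _ 1] conjI allI impI)
  show "(0::real) < 1" by simp
  fix X Y Z :: "nat set" and f :: "nat \<Rightarrow> nat \<Rightarrow> nat" and d :: real and l r :: nat
    and Ob :: "(nat \<times> nat) list"
  assume H: "finite X \<and> finite Y \<and> finite Z \<and> card Z \<ge> 2 \<and>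
       (\<forall>x\<in>X. \<forall>y\<in>Y. f x y \<in> Z) \<and>
       mdisc X Y Z f \<le> 2 powr (- d) \<and>
       l \<ge> 1 \<and> r \<ge> 1 \<and>
       distinct Ob \<and> (\<forall>(i, j)\<in>set Ob. i < l \<and> j < r) \<and>
       real (length Ob) \<le> d / 5"
  then have finX: "finite X" and finY: "finite Y" and finZ: "finite Z" and Z2: "card Z \<ge> 2"
    and md: "mdisc X Y Z f \<le> 2 powr (- d)" and dist: "distinct Ob"
    and rng: "\<forall>(i, j)\<in>set Ob. i < l \<and> j < r" and kd: "real (length Ob) \<le> d / 5"
    by auto
  have Zne: "Z \<noteq> {}" using Z2 by auto
  have "mdisc (tuples X l) (tuples Y r) (tuples Z (length Ob)) (fO f Ob) \<le> real (length Ob) * mdisc X Y Z f"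
    by (rule mdisc_le[OF finite_tuples[OF finX] finite_tuples[OF finY] finite_tuples[OF finZ]
          tuples_nonempty[OF Zne]])
       (rule rect_bound[OF finX finY finZ _ dist rng], use Z2 in auto)
  also have "\<dots> \<le> real (length Ob) * 2 powr (- d)" by (rule mult_left_mono[OF md]) simp
  also have "\<dots> \<le> 2 powr (- d / 4)" by (rule arith_final[OF _ kd]) simp
  finally show "mdisc (tuples X l) (tuples Y r) (tuples Z (length Ob)) (fO f Ob) \<le> 1 * 2 powr (- d / 4)"
    by simp
qed

end
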